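(* Let $\Lambda$ be an admissible temporal logic over a temporal language $\mathcal L$, let $W_c$ be the set of prime $\mathcal L$-types, ordered by $\Phi\preccurlyeq_c\Psi$ iff $\Phi^+\subseteq\Psi^+$ and $\Psi^-\subseteq\Phi^-$, and let $S_c\subseteq W_c\times W_c$ be the relation $\Phi\mathrel{S_c}\Psi$ iff the pair $(\Phi,\Psi)$ is sensible. Then $S_c$ is a function $W_c\to W_c$ which is monotone (i.e. $\Phi\preccurlyeq_c\Psi$ implies $S_c(\Phi)\preccurlyeq_c S_c(\Psi)$). If moreover $(\circ\varphi\to\circ\psi)\to\circ(\varphi\to\psi)$ is an axiom of $\Lambda$ (for all $\varphi,\psi$), then $S_c$ is also open: whenever $S_c(\Phi)\preccurlyeq_c\Psi$, there is $\Theta\in W_c$ with $\Phi\preccurlyeq_c\Theta$ and $S_c(\Theta)=\Psi$.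
   Context: Formulas are built from $\bot$ and propositional variables using $\wedge,\vee,\to$ and modalities $\circ,\Diamond,\Box,\forall$. A temporal language $\mathcal L_M$ ($M\subseteq\{\Diamond,\Box,\forall\}$) uses $\bot$, variables, $\wedge,\vee,\to,\circ$ and only modalities in $M$. ${\sf ITL}^0_M$ denotes the logic over $\mathcal L_M$ axiomatized by intuitionistic propositional logic, (N1) $\neg\circ\bot$, (N2) $\circ\varphi\wedge\circ\psi\to\circ(\varphi\wedge\psi)$, (N3) $\circ(\varphi\vee\psi)\to\circ\varphi\vee\circ\psi$, (N4) $\circ(\varphi\to\psi)\to(\circ\varphi\to\circ\psi)$, rules modus ponens and from $\varphi$ infer $\circ\varphi$; plus, if $\Diamond\in M$, axiom $\varphi\vee\circ\Diamond\varphi\to\Diamond\varphi$ and rules from $\varphi\to\psi$ infer $\Diamond\varphi\to\Diamond\psi$, from $\circ\varphi\to\varphi$ infer $\Diamond\varphi\to\varphi$; plus, if $\forall\in M$, axioms $\forall\varphi\vee\neg\forall\varphi$, $\forall(\varphi\to\psi)\to(\forall\varphi\to\forall\psi)$, $\forall(\varphi\vee\forall\psi)\to\forall\varphi\vee\forall\psi$, $\forall\varphi\to\varphi$, $\forall\varphi\to\forall\forall\varphi$, $\forall\varphi\leftrightarrow\circ\forall\varphi$ and rule from $\varphi$ infer $\forall\varphi$. An admissible temporal logic over $\mathcal L_M$ is a set of $\mathcal L_M$-formulas containing all substitution instances of the axioms of ${\sf ITL}^0_M$ and closed under its rules. $\Gamma\vdash\Delta$ means there are finite $\Gamma'\subseteq\Gamma$,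 $\Delta'\subseteq\Delta$ with $\bigwedge\Gamma'\to\bigvee\Delta'\in\Lambda$. A prime $\mathcal L$-type is a pair $\Phi=(\Phi^+,\Phi^-)$ of sets of $\mathcal L$-formulas with $\Phi^+\cup\Phi^-=\mathcal L$ and $\Phi^+\not\vdash\Phi^-$. A pair $(\Phi,\Psi)$ is sensible if: $\circ\varphi\in\Phi^+$ implies $\varphi\in\Psi^+$; $\circ\varphi\in\Phi^-$ implies $\varphi\in\Psi^-$; $\Diamond\varphi\in\Phi^+$ implies $\varphi\in\Phi^+$ or $\Diamond\varphi\in\Psi^+$; $\Diamond\varphi\in\Phi^-$ implies $\Diamond\varphi\in\Psi^-$; $\forall\varphi\in\Phi^+$ iff $\forall\varphi\in\Psi^+$; $\forall\varphi\in\Phi^-$ iff $\forall\varphi\in\Psi^-$. *)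

theory Defs
  imports Main
begin

datatype modality = MDia | MBox | MAll

datatype form =
    Bot
  | Var nat
  | And form form
  | Or form form
  | Imp form form
  | Next form
  | Dia form
  | Box form
  | All form

definition Neg :: "form \<Rightarrow> form" where "Neg \<phi> = Imp \<phi> Bot"
definition Iff :: "form \<Rightarrow> form \<Rightarrow> form" where "Iff \<phi> \<psi> = And (Imp \<phi> \<psi>) (Imp \<psi> \<phi>)"
definition Top :: form where "Top = Imp Bot Bot"

fun in_lang :: "modality set \<Rightarrow> form \<Rightarrow> bool" where
  "in_lang M Bot = True"
| "in_lang M (Var p) = True"
| "in_lang M (And a b) = (in_lang M a \<and> in_lang M b)"
| "in_lang M (Or a b) = (in_lang M a \<and> in_lang M b)"
| "in_lang M (Imp a b) = (in_lang M a \<and> in_lang M b)"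
| "in_lang M (Next a) = in_lang M a"
| "in_lang M (Dia a) = (MDia \<in> M \<and> in_lang M a)"
| "in_lang M (Box a) = (MBox \<in> M \<and> in_lang M a)"
| "in_lang M (All a) = (MAll \<in> M \<and> in_lang M a)"

definition lang :: "modality set \<Rightarrow> form set" where
  "lang M = {\<phi>. in_lang M \<phi>}"

text \<open>Axiom schemes of ITL^0_M, instantiated with L_M-formulas (so the set is
closed under substitution). Intuitionistic propositional logic is given by a
standard Hilbert-style axiomatization.\<close>
definition ipl_axioms :: "modality set \<Rightarrow> form set" where
  "ipl_axioms M = {\<theta>. \<exists>\<phi>\<in>lang M. \<exists>\<psi>\<in>lang M. \<exists>\<chi>\<in>lang M.
       \<theta> = Imp \<phi> (Imp \<psi> \<phi>)
     \<or> \<theta> = Imp (Imp \<phi> (Imp \<psi> \<chi>)) (Imp (Imp \<phi> \<psi>) (Imp \<phi> \<chi>))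
     \<or> \<theta> = Imp (And \<phi> \<psi>) \<phi>
     \<or> \<theta> = Imp (And \<phi> \<psi>) \<psi>
     \<or> \<theta> = Imp \<phi> (Imp \<psi> (And \<phi> \<psi>))
     \<or> \<theta> = Imp \<phi> (Or \<phi> \<psi>)
     \<or> \<theta> = Imp \<psi> (Or \<phi> \<psi>)
     \<or> \<theta> = Imp (Imp \<phi> \<chi>) (Imp (Imp \<psi> \<chi>) (Imp (Or \<phi> \<psi>) \<chi>))
     \<or> \<theta> = Imp Bot \<phi>}"

definition next_axioms :: "modality set \<Rightarrow> form set" where
  "next_axioms M = {\<theta>. \<exists>\<phi>\<in>lang M. \<exists>\<psi>\<in>lang M.
       \<theta> = Neg (Next Bot)
     \<or> \<theta> = Imp (And (Next \<phi>) (Next \<psi>)) (Next (And \<phi> \<psi>))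
     \<or> \<theta> = Imp (Next (Or \<phi> \<psi>)) (Or (Next \<phi>) (Next \<psi>))
     \<or> \<theta> = Imp (Next (Imp \<phi> \<psi>)) (Imp (Next \<phi>) (Next \<psi>))}"

definition dia_axioms :: "modality set \<Rightarrow> form set" where
  "dia_axioms M = {\<theta>. MDia \<in> M \<and> (\<exists>\<phi>\<in>lang M.
       \<theta> = Imp (Or \<phi> (Next (Dia \<phi>))) (Dia \<phi>))}"

definition all_axioms :: "modality set \<Rightarrow> form set" where
  "all_axioms M = {\<theta>. MAll \<in> M \<and> (\<exists>\<phi>\<in>lang M. \<exists>\<psi>\<in>lang M.
       \<theta> = Or (All \<phi>) (Neg (All \<phi>))
     \<or> \<theta> = Imp (All (Imp \<phi> \<psi>)) (Imp (All \<phi>) (All \<psi>))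
     \<or> \<theta> = Imp (All (Or \<phi> (All \<psi>))) (Or (All \<phi>) (All \<psi>))
     \<or> \<theta> = Imp (All \<phi>) \<phi>
     \<or> \<theta> = Imp (All \<phi>) (All (All \<phi>))
     \<or> \<theta> = Iff (All \<phi>) (Next (All \<phi>)))}"

definition itl0_axioms :: "modality set \<Rightarrow> form set" where
  "itl0_axioms M = ipl_axioms M \<union> next_axioms M \<union> dia_axioms M \<union> all_axioms M"

text \<open>An admissible temporal logic over L_M (where M \<subseteq> {\<Diamond>,\<box>,\<forall>}, which is
automatic for the type modality).\<close>
definition admissible :: "modality set \<Rightarrow> form set \<Rightarrow> bool" where
  "admissible M \<Lambda> \<longleftrightarrow>
     \<Lambda> \<subseteq> lang M
   \<and> itl0_axioms M \<subseteq> \<Lambda>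
   \<and> (\<forall>\<phi> \<psi>. \<phi> \<in> \<Lambda> \<longrightarrow> Imp \<phi> \<psi> \<in> \<Lambda> \<longrightarrow> \<psi> \<in> \<Lambda>)
   \<and> (\<forall>\<phi>. \<phi> \<in> \<Lambda> \<longrightarrow> Next \<phi> \<in> \<Lambda>)
   \<and> (MDia \<in> M \<longrightarrow>
        (\<forall>\<phi> \<psi>. Imp \<phi> \<psi> \<in> \<Lambda> \<longrightarrow> Imp (Dia \<phi>) (Dia \<psi>) \<in> \<Lambda>)
      \<and> (\<forall>\<phi>. Imp (Next \<phi>) \<phi> \<in> \<Lambda> \<longrightarrow> Imp (Dia \<phi>) \<phi> \<in> \<Lambda>))
   \<and> (MAll \<in> M \<longrightarrow> (\<forall>\<phi>. \<phi> \<in> \<Lambda> \<longrightarrow> All \<phi> \<in> \<Lambda>))"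

fun conj_list :: "form list \<Rightarrow> form" where
  "conj_list [] = Top"
| "conj_list (\<phi> # \<phi>s) = And \<phi> (conj_list \<phi>s)"

fun disj_list :: "form list \<Rightarrow> form" where
  "disj_list [] = Bot"
| "disj_list (\<phi> # \<phi>s) = Or \<phi> (disj_list \<phi>s)"

text \<open>\<Gamma> \<turnstile> \<Delta> relative to \<Lambda>: finite subsets given by lists.\<close>
definition derives :: "form set \<Rightarrow> form set \<Rightarrow> form set \<Rightarrow> bool" where
  "derives \<Lambda> \<Gamma> \<Delta> \<longleftrightarrow>
     (\<exists>gs ds. set gs \<subseteq> \<Gamma> \<and> set ds \<subseteq> \<Delta> \<and> Imp (conj_list gs) (disj_list ds) \<in> \<Lambda>)"

type_synonym ltype = "form set \<times> form set"

definition prime_type :: "modality set \<Rightarrow> form set \<Rightarrow> ltype \<Rightarrow> bool" where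
  "prime_type M \<Lambda> \<Phi> \<longleftrightarrow>
     fst \<Phi> \<subseteq> lang M \<and> snd \<Phi> \<subseteq> lang M \<and> fst \<Phi> \<union> snd \<Phi> = lang M
   \<and> \<not> derives \<Lambda> (fst \<Phi>) (snd \<Phi>)"

definition Wc :: "modality set \<Rightarrow> form set \<Rightarrow> ltype set" where
  "Wc M \<Lambda> = {\<Phi>. prime_type M \<Lambda> \<Phi>}"

definition leq_c :: "ltype \<Rightarrow> ltype \<Rightarrow> bool" where
  "leq_c \<Phi> \<Psi> \<longleftrightarrow> fst \<Phi> \<subseteq> fst \<Psi> \<and> snd \<Psi> \<subseteq> snd \<Phi>"

definition sensible :: "ltype \<Rightarrow> ltype \<Rightarrow> bool" where
  "sensible \<Phi> \<Psi> \<longleftrightarrow>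
     (\<forall>\<phi>. Next \<phi> \<in> fst \<Phi> \<longrightarrow> \<phi> \<in> fst \<Psi>)
   \<and> (\<forall>\<phi>. Next \<phi> \<in> snd \<Phi> \<longrightarrow> \<phi> \<in> snd \<Psi>)
   \<and> (\<forall>\<phi>. Dia \<phi> \<in> fst \<Phi> \<longrightarrow> \<phi> \<in> fst \<Phi> \<or> Dia \<phi> \<in> fst \<Psi>)
   \<and> (\<forall>\<phi>. Dia \<phi> \<in> snd \<Phi> \<longrightarrow> Dia \<phi> \<in> snd \<Psi>)
   \<and> (\<forall>\<phi>. All \<phi> \<in> fst \<Phi> \<longleftrightarrow> All \<phi> \<in> fst \<Psi>)
   \<and> (\<forall>\<phi>. All \<phi> \<in> snd \<Phi> \<longleftrightarrow> All \<phi> \<in> snd \<Psi>)"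

definition Sc :: "modality set \<Rightarrow> form set \<Rightarrow> (ltype \<times> ltype) set" where
  "Sc M \<Lambda> = {(\<Phi>, \<Psi>). \<Phi> \<in> Wc M \<Lambda> \<and> \<Psi> \<in> Wc M \<Lambda> \<and> sensible \<Phi> \<Psi>}"

end

theory Submission
  imports Defs
begin


lemma lang_simps[simp]:
  "Bot \<in> lang M" "Var p \<in> lang M"
  "And a b \<in> lang M \<longleftrightarrow> a \<in> lang M \<and> b \<in> lang M"
  "Or a b \<in> lang M \<longleftrightarrow> a \<in> lang M \<and> b \<in> lang M"
  "Imp a b \<in> lang M \<longleftrightarrow> a \<in> lang M \<and> b \<in> lang M"
  "Next a \<in> lang M \<longleftrightarrow> a \<in> lang M"
  "Dia a \<in> lang M \<longleftrightarrow> MDia \<in> M \<and> a \<in> lang M"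
  "All a \<in> lang M \<longleftrightarrow> MAll \<in> M \<and> a \<in> lang M"
  "Top \<in> lang M"
  by (auto simp: lang_def Top_def)

lemma conj_lang[simp]: "conj_list gs \<in> lang M \<longleftrightarrow> set gs \<subseteq> lang M"
  by (induction gs) auto
lemma disj_lang[simp]: "disj_list gs \<in> lang M \<longleftrightarrow> set gs \<subseteq> lang M"
  by (induction gs) auto

locale ctx =
  fixes M :: "modality set" and Lam :: "form set"
  assumes adm: "admissible M Lam"
begin

abbreviation "L \<equiv> lang M"

lemma Lam_sub: "Lam \<subseteq> L" using adm unfolding admissible_def by blast
lemma mpL: "a \<in> Lam \<Longrightarrow> Imp a b \<in> Lam \<Longrightarrow> b \<in> Lam" using adm unfolding admissible_def by blast
lemma necL: "a \<in> Lam \<Longrightarrow> Next a \<in> Lam" using adm unfolding admissible_def by blast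

lemma ipl_in: "ipl_axioms M \<subseteq> Lam" and next_in: "next_axioms M \<subseteq> Lam"
  and dia_in: "dia_axioms M \<subseteq> Lam" and all_in: "all_axioms M \<subseteq> Lam"
  using adm unfolding admissible_def itl0_axioms_def by blast+

lemma axK: "a \<in> L \<Longrightarrow> b \<in> L \<Longrightarrow> Imp a (Imp b a) \<in> Lam"
  using ipl_in unfolding ipl_axioms_def by blast
lemma axS: "a \<in> L \<Longrightarrow> b \<in> L \<Longrightarrow> c \<in> L \<Longrightarrow> Imp (Imp a (Imp b c)) (Imp (Imp a b) (Imp a c)) \<in> Lam"
  using ipl_in unfolding ipl_axioms_def by blast
lemma axAE1: "a \<in> L \<Longrightarrow> b \<in> L \<Longrightarrow> Imp (And a b) a \<in> Lam"
  using ipl_in unfolding ipl_axioms_def by blast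
lemma axAE2: "a \<in> L \<Longrightarrow> b \<in> L \<Longrightarrow> Imp (And a b) b \<in> Lam"
  using ipl_in unfolding ipl_axioms_def by blast
lemma axAI: "a \<in> L \<Longrightarrow> b \<in> L \<Longrightarrow> Imp a (Imp b (And a b)) \<in> Lam"
  using ipl_in unfolding ipl_axioms_def by blast
lemma axOI1: "a \<in> L \<Longrightarrow> b \<in> L \<Longrightarrow> Imp a (Or a b) \<in> Lam"
  using ipl_in unfolding ipl_axioms_def by blast
lemma axOI2: "a \<in> L \<Longrightarrow> b \<in> L \<Longrightarrow> Imp b (Or a b) \<in> Lam"
  using ipl_in unfolding ipl_axioms_def by blast
lemma axOE: "a \<in> L \<Longrightarrow> b \<in> L \<Longrightarrow> c \<in> L \<Longrightarrow> Imp (Imp a c) (Imp (Imp b c) (Imp (Or a b) c)) \<in> Lam"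
  using ipl_in unfolding ipl_axioms_def by blast
lemma axBot: "a \<in> L \<Longrightarrow> Imp Bot a \<in> Lam"
  using ipl_in unfolding ipl_axioms_def by blast
lemma axN1: "Imp (Next Bot) Bot \<in> Lam"
proof -
  have "Imp (Next Bot) Bot \<in> next_axioms M"
    unfolding next_axioms_def Neg_def using lang_simps(1)[of M] by blast
  then show ?thesis using next_in by blast
qed
lemma axN2: "a \<in> L \<Longrightarrow> b \<in> L \<Longrightarrow> Imp (And (Next a) (Next b)) (Next (And a b)) \<in> Lam"
  using next_in unfolding next_axioms_def by blast
lemma axN3: "a \<in> L \<Longrightarrow> b \<in> L \<Longrightarrow> Imp (Next (Or a b)) (Or (Next a) (Next b)) \<in> Lam"
  using next_in unfolding next_axioms_def by blast
lemma axN4: "a \<in> L \<Longrightarrow> b \<in> L \<Longrightarrow> Imp (Next (Imp a b)) (Imp (Next a) (Next b)) \<in> Lam"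
  using next_in unfolding next_axioms_def by blast
lemma axDia: "MDia \<in> M \<Longrightarrow> a \<in> L \<Longrightarrow> Imp (Or a (Next (Dia a))) (Dia a) \<in> Lam"
  using dia_in unfolding dia_axioms_def by blast
lemma axAllIff: "MAll \<in> M \<Longrightarrow> a \<in> L \<Longrightarrow> Iff (All a) (Next (All a)) \<in> Lam"
  using all_in unfolding all_axioms_def by blast
lemma ruleDiaMono: "MDia \<in> M \<Longrightarrow> Imp a b \<in> Lam \<Longrightarrow> Imp (Dia a) (Dia b) \<in> Lam"
  using adm unfolding admissible_def by blast
lemma ruleDiaInd: "MDia \<in> M \<Longrightarrow> Imp (Next a) a \<in> Lam \<Longrightarrow> Imp (Dia a) a \<in> Lam"
  using adm unfolding admissible_def by blast

inductive pf :: "form set \<Rightarrow> form \<Rightarrow> bool" for G where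
  hyp: "a \<in> G \<Longrightarrow> pf G a"
| lam: "a \<in> Lam \<Longrightarrow> pf G a"
| mp: "pf G (Imp a b) \<Longrightarrow> pf G a \<Longrightarrow> pf G b"

lemma pf_lang: "pf G a \<Longrightarrow> G \<subseteq> L \<Longrightarrow> a \<in> L"
  by (induction rule: pf.induct) (use Lam_sub in auto)

lemma pf_empty: "pf {} a \<Longrightarrow> a \<in> Lam"
  by (induction rule: pf.induct) (auto intro: mpL)

lemma pf_mono: "pf G a \<Longrightarrow> G \<subseteq> G' \<Longrightarrow> pf G' a"
  by (induction rule: pf.induct) (auto intro: pf.intros)

lemma pf_cut: "pf G a \<Longrightarrow> (\<And>g. g \<in> G \<Longrightarrow> pf H g) \<Longrightarrow> pf H a"
  by (induction rule: pf.induct) (auto intro: pf.intros)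

lemma mp2: "pf G (Imp a (Imp b c)) \<Longrightarrow> pf G a \<Longrightarrow> pf G b \<Longrightarrow> pf G c"
  by (rule pf.mp[of G b c], rule pf.mp[of G a]) auto

lemma pf_id: "a \<in> L \<Longrightarrow> Imp a a \<in> Lam"
proof -
  assume a: "a \<in> L"
  have 1: "pf {} (Imp (Imp a (Imp (Imp a a) a)) (Imp (Imp a (Imp a a)) (Imp a a)))"
    using a by (intro pf.lam axS) auto
  have 2: "pf {} (Imp a (Imp (Imp a a) a))" using a by (intro pf.lam axK) auto
  have 3: "pf {} (Imp a (Imp a a))" using a by (intro pf.lam axK) auto
  have "pf {} (Imp a a)" using mp2[OF 1 2 3] .
  then show ?thesis by (rule pf_empty)
qed

lemma ded: "pf (insert a G) b \<Longrightarrow> G \<subseteq> L \<Longrightarrow> a \<in> L \<Longrightarrow> pf G (Imp a b)"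
proof (induction rule: pf.induct)
  case (hyp c)
  then show ?case
  proof (cases "c = a")
    case True then show ?thesis using hyp pf_id by (auto intro: pf.lam)
  next
    case False
    then have c: "c \<in> G" using hyp by auto
    then have "c \<in> L" using hyp by auto
    then have "pf G (Imp c (Imp a c))" using hyp by (intro pf.lam axK) auto
    then show ?thesis using c pf.hyp pf.mp by blast
  qed
next
  case (lam c)
  then have "c \<in> L" using Lam_sub by auto
  then have "pf G (Imp c (Imp a c))" using lam by (intro pf.lam axK) auto
  then show ?case using lam pf.lam pf.mp by blast
next
  case (mp c d)
  have "insert a G \<subseteq> L" using mp by auto
  then have "Imp c d \<in> L" using mp pf_lang by blast
  then have "pf G (Imp (Imp a (Imp c d)) (Imp (Imp a c) (Imp a d)))"
    using mp by (intro pf.lam axS) auto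
  then show ?case using mp mp2 by blast
qed

context
  fixes G assumes GL: "G \<subseteq> L"
begin

lemma andI: "pf G a \<Longrightarrow> pf G b \<Longrightarrow> pf G (And a b)"
proof -
  assume a: "pf G a" and b: "pf G b"
  have "a \<in> L" "b \<in> L" using pf_lang a b GL by auto
  then have "pf G (Imp a (Imp b (And a b)))" by (intro pf.lam axAI)
  then show ?thesis using mp2 a b by blast
qed
lemma andE1: "pf G (And a b) \<Longrightarrow> pf G a"
proof -
  assume a: "pf G (And a b)"
  have "a \<in> L" "b \<in> L" using pf_lang[OF a GL] by auto
  then have "pf G (Imp (And a b) a)" by (intro pf.lam axAE1)
  then show ?thesis using pf.mp a by blast
qed
lemma andE2: "pf G (And a b) \<Longrightarrow> pf G b"
proof -
  assume a: "pf G (And a b)"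
  have "a \<in> L" "b \<in> L" using pf_lang[OF a GL] by auto
  then have "pf G (Imp (And a b) b)" by (intro pf.lam axAE2)
  then show ?thesis using pf.mp a by blast
qed
lemma orI1: "pf G a \<Longrightarrow> b \<in> L \<Longrightarrow> pf G (Or a b)"
proof -
  assume a: "pf G a" and b: "b \<in> L"
  have "a \<in> L" using pf_lang[OF a GL] by auto
  then have "pf G (Imp a (Or a b))" using b by (intro pf.lam axOI1)
  then show ?thesis using pf.mp a by blast
qed
lemma orI2: "pf G b \<Longrightarrow> a \<in> L \<Longrightarrow> pf G (Or a b)"
proof -
  assume a: "pf G b" and b: "a \<in> L"
  have "b \<in> L" using pf_lang[OF a GL] by auto
  then have "pf G (Imp b (Or a b))" using b by (intro pf.lam axOI2)
  then show ?thesis using pf.mp a by blast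
qed
lemma orE: "pf G (Or a b) \<Longrightarrow> pf (insert a G) c \<Longrightarrow> pf (insert b G) c \<Longrightarrow> pf G c"
proof -
  assume o: "pf G (Or a b)" and 1: "pf (insert a G) c" and 2: "pf (insert b G) c"
  have ab: "a \<in> L" "b \<in> L" using pf_lang[OF o GL] by auto
  have c: "c \<in> L" using pf_lang[OF 1] GL ab by auto
  have i: "pf G (Imp a c)" "pf G (Imp b c)" using ded 1 2 GL ab by auto
  have "pf G (Imp (Imp a c) (Imp (Imp b c) (Imp (Or a b) c)))" using ab c by (intro pf.lam axOE)
  then have "pf G (Imp (Or a b) c)" using mp2 i by blast
  then show ?thesis using o pf.mp by blast
qed
lemma botE: "pf G Bot \<Longrightarrow> c \<in> L \<Longrightarrow> pf G c"
  using axBot pf.lam pf.mp by blast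
lemma impI: "pf (insert a G) b \<Longrightarrow> a \<in> L \<Longrightarrow> pf G (Imp a b)"
  using ded GL by blast
lemma topI: "pf G Top"
  unfolding Top_def using pf_id by (auto intro: pf.lam)
lemma nextK: "pf G (Next (Imp a b)) \<Longrightarrow> pf G (Next a) \<Longrightarrow> pf G (Next b)"
proof -
  assume a: "pf G (Next (Imp a b))" and b: "pf G (Next a)"
  have "a \<in> L" "b \<in> L" using pf_lang[OF a GL] by auto
  then have "pf G (Imp (Next (Imp a b)) (Imp (Next a) (Next b)))" by (intro pf.lam axN4)
  then show ?thesis using mp2 a b by blast
qed
lemma nextMono: "Imp a b \<in> Lam \<Longrightarrow> pf G (Next a) \<Longrightarrow> pf G (Next b)"
  using nextK necL pf.lam by blast
lemma nextAnd: "pf G (Next a) \<Longrightarrow> pf G (Next b) \<Longrightarrow> pf G (Next (And a b))"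
proof -
  assume a: "pf G (Next a)" and b: "pf G (Next b)"
  have "a \<in> L" "b \<in> L" using pf_lang[OF a GL] pf_lang[OF b GL] by auto
  then have "pf G (Imp (And (Next a) (Next b)) (Next (And a b)))" by (intro pf.lam axN2)
  then show ?thesis using pf.mp andI a b by blast
qed
lemma nextOr: "pf G (Next (Or a b)) \<Longrightarrow> pf G (Or (Next a) (Next b))"
proof -
  assume a: "pf G (Next (Or a b))"
  have "a \<in> L" "b \<in> L" using pf_lang[OF a GL] by auto
  then have "pf G (Imp (Next (Or a b)) (Or (Next a) (Next b)))" by (intro pf.lam axN3)
  then show ?thesis using pf.mp a by blast
qed
lemma nextBot: "pf G (Next Bot) \<Longrightarrow> pf G Bot"
  using axN1 pf.lam pf.mp by blast

lemma conjI_list: "(\<And>g. g \<in> set gs \<Longrightarrow> pf G g) \<Longrightarrow> pf G (conj_list gs)"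
proof (induction gs)
  case Nil then show ?case using topI by simp
next
  case (Cons a gs)
  have "pf G a" "pf G (conj_list gs)" using Cons by auto
  then show ?case using andI by simp
qed
lemma conjE_list: "pf G (conj_list gs) \<Longrightarrow> g \<in> set gs \<Longrightarrow> pf G g"
proof (induction gs)
  case Nil then show ?case by simp
next
  case (Cons a gs)
  have c: "pf G (And a (conj_list gs))" using Cons.prems(1) by simp
  have "pf G a" "pf G (conj_list gs)" using andE1[OF c] andE2[OF c] by auto
  then show ?case using Cons by auto
qed
lemma disjI_list: "pf G d \<Longrightarrow> d \<in> set ds \<Longrightarrow> set ds \<subseteq> L \<Longrightarrow> pf G (disj_list ds)"
proof (induction ds)
  case Nil then show ?case by simp
next
  case (Cons a ds)
  show ?case
  proof (cases "d = a")
    case True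
    have "disj_list ds \<in> L" using Cons.prems(3) by simp
    then show ?thesis using True Cons.prems(1) orI1[of d "disj_list ds"] by simp
  next
    case False
    have "d \<in> set ds" "set ds \<subseteq> L" "a \<in> L" using False Cons.prems by auto
    then have "pf G (disj_list ds)" using Cons.IH Cons.prems(1) by blast
    then show ?thesis using orI2[of "disj_list ds" a] \<open>a \<in> L\<close> by simp
  qed
qed
end

lemma disjE_list: "G \<subseteq> L \<Longrightarrow> pf G (disj_list ds) \<Longrightarrow> c \<in> L \<Longrightarrow>
   (\<And>d. d \<in> set ds \<Longrightarrow> pf (insert d G) c) \<Longrightarrow> pf G c"
proof (induction ds arbitrary: G)
  case Nil
  have "pf G Bot" using Nil(2) by simp
  then show ?case using botE[OF Nil(1)] Nil(3) by blast
next
  case (Cons d ds)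
  have dl: "d \<in> L" "set ds \<subseteq> L" using pf_lang[OF Cons(3) Cons(2)] by auto
  let ?G = "insert (disj_list ds) G"
  have GL: "?G \<subseteq> L" using Cons(2) dl by simp
  have h: "pf ?G (disj_list ds)" by (rule pf.hyp) simp
  have "pf (insert d' ?G) c" if "d' \<in> set ds" for d'
  proof -
    have "pf (insert d' G) c" using Cons.prems(4)[of d'] that by simp
    moreover have "insert d' G \<subseteq> insert d' ?G" by blast
    ultimately show ?thesis by (rule pf_mono)
  qed
  then have "pf ?G c" using Cons.IH[OF GL h Cons.prems(3)] by blast
  moreover have "pf (insert d G) c" using Cons.prems(4) by simp
  moreover have "pf G (Or d (disj_list ds))" using Cons.prems(2) by simp
  ultimately show ?case using orE[OF Cons.prems(1)] by blast
qed

end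



context ctx begin

abbreviation prime where "prime \<Phi> \<equiv> prime_type M Lam \<Phi>"

lemma lamI: "a \<in> L \<Longrightarrow> pf {a} b \<Longrightarrow> Imp a b \<in> Lam"
  using ded[of a "{}" b] pf_empty by auto

lemma derives_pfI:
  assumes H: "finite H" "H \<subseteq> X" and XL: "X \<subseteq> L" and ds: "set ds \<subseteq> Y"
    and p: "pf H (disj_list ds)"
  shows "derives Lam X Y"
proof -
  obtain gs where gs: "set gs = H" using finite_list[OF H(1)] by blast
  have gL: "set gs \<subseteq> L" using gs H XL by auto
  let ?c = "conj_list gs"
  have cL: "{?c} \<subseteq> L" using gL by simp
  have "pf {?c} g" if "g \<in> H" for g
    using conjE_list[OF cL, of gs g] pf.hyp[of ?c "{?c}"] that gs by auto
  then have "pf {?c} (disj_list ds)" using pf_cut[OF p] by blast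
  then have "Imp ?c (disj_list ds) \<in> Lam" using lamI gL by simp
  then show ?thesis unfolding derives_def using gs H ds by blast
qed

lemma derives_pfD:
  assumes "derives Lam X Y" "X \<subseteq> L"
  shows "\<exists>gs ds. set gs \<subseteq> X \<and> set ds \<subseteq> Y \<and> pf (set gs) (disj_list ds)"
proof -
  obtain gs ds where g: "set gs \<subseteq> X" "set ds \<subseteq> Y" "Imp (conj_list gs) (disj_list ds) \<in> Lam"
    using assms(1) unfolding derives_def by blast
  have gL: "set gs \<subseteq> L" using g assms(2) by auto
  have "pf (set gs) (conj_list gs)"
    using conjI_list[OF gL, of gs] pf.hyp[of _ "set gs"] by blast
  then have "pf (set gs) (disj_list ds)" using g(3) pf.lam pf.mp by blast
  then show ?thesis using g by blast
qed

lemma prime_L: "prime \<Phi> \<Longrightarrow> fst \<Phi> \<subseteq> L" "prime \<Phi> \<Longrightarrow> snd \<Phi> \<subseteq> L"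
  "prime \<Phi> \<Longrightarrow> fst \<Phi> \<union> snd \<Phi> = L" "prime \<Phi> \<Longrightarrow> \<not> derives Lam (fst \<Phi>) (snd \<Phi>)"
  unfolding prime_type_def by blast+

lemma prime_snd: "prime \<Phi> \<Longrightarrow> a \<in> L \<Longrightarrow> a \<notin> fst \<Phi> \<Longrightarrow> a \<in> snd \<Phi>"
  using prime_L(3) by blast

lemma prime_closed:
  assumes P: "prime \<Phi>" and H: "finite H" "H \<subseteq> fst \<Phi>" and p: "pf H a" and aL: "a \<in> L"
  shows "a \<in> fst \<Phi>"
proof (rule ccontr)
  assume "a \<notin> fst \<Phi>"
  then have a: "a \<in> snd \<Phi>" using prime_snd[OF P aL] by blast
  have HL: "H \<subseteq> L" using H prime_L(1)[OF P] by blast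
  have "pf H (disj_list [a])" using disjI_list[OF HL p, of "[a]"] aL by simp
  then have "derives Lam (fst \<Phi>) (snd \<Phi>)"
    using derives_pfI[OF H prime_L(1)[OF P], of "[a]"] a by simp
  then show False using prime_L(4)[OF P] by blast
qed

lemma prime_disj: "prime \<Phi> \<Longrightarrow> a \<in> fst \<Phi> \<Longrightarrow> a \<in> snd \<Phi> \<Longrightarrow> False"
proof -
  assume P: "prime \<Phi>" and a: "a \<in> fst \<Phi>" "a \<in> snd \<Phi>"
  have aL: "a \<in> L" using a prime_L(1)[OF P] by blast
  have "pf {a} (disj_list [a])" using disjI_list[of "{a}" a "[a]"] aL pf.hyp[of a "{a}"] by simp
  then have "derives Lam (fst \<Phi>) (snd \<Phi>)"
    using derives_pfI[of "{a}" "fst \<Phi>", OF _ _ prime_L(1)[OF P], of "[a]"] a by simp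
  then show False using prime_L(4)[OF P] by blast
qed

lemma prime_imp: "prime \<Phi> \<Longrightarrow> a \<in> fst \<Phi> \<Longrightarrow> Imp a b \<in> Lam \<Longrightarrow> b \<in> fst \<Phi>"
proof -
  assume P: "prime \<Phi>" and a: "a \<in> fst \<Phi>" and i: "Imp a b \<in> Lam"
  have "pf {a} b" using pf.mp[OF pf.lam[OF i] pf.hyp[of a "{a}"]] by simp
  moreover have "b \<in> L" using i Lam_sub by auto
  ultimately show ?thesis using prime_closed[OF P, of "{a}" b] a by simp
qed

lemma prime_or: "prime \<Phi> \<Longrightarrow> Or a b \<in> fst \<Phi> \<Longrightarrow> a \<in> fst \<Phi> \<or> b \<in> fst \<Phi>"
proof (rule ccontr)
  assume P: "prime \<Phi>" and o: "Or a b \<in> fst \<Phi>" and n: "\<not> (a \<in> fst \<Phi> \<or> b \<in> fst \<Phi>)"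
  have L: "a \<in> L" "b \<in> L" using o prime_L(1)[OF P] by auto
  then have s: "a \<in> snd \<Phi>" "b \<in> snd \<Phi>" using n prime_snd[OF P] by auto
  let ?G = "{Or a b}"
  have GL: "?G \<subseteq> L" using L by simp
  have dl: "set [a,b] \<subseteq> L" using L by simp
  have 1: "pf (insert a ?G) (disj_list [a,b])"
    using disjI_list[OF _ pf.hyp _ dl, of "insert a ?G" a] GL L by simp
  have 2: "pf (insert b ?G) (disj_list [a,b])"
    using disjI_list[OF _ pf.hyp _ dl, of "insert b ?G" b] GL L by simp
  have "pf ?G (disj_list [a,b])" using orE[OF GL pf.hyp 1 2] by simp
  then have "derives Lam (fst \<Phi>) (snd \<Phi>)"
    using derives_pfI[of ?G "fst \<Phi>", OF _ _ prime_L(1)[OF P], of "[a,b]"] o s by simp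
  then show False using prime_L(4)[OF P] by blast
qed

lemma dia_next: "MDia \<in> M \<Longrightarrow> a \<in> L \<Longrightarrow> Imp (Next (Dia a)) (Dia a) \<in> Lam"
proof -
  assume m: "MDia \<in> M" and a: "a \<in> L"
  have ax: "Imp (Or a (Next (Dia a))) (Dia a) \<in> Lam" using axDia m a .
  have G: "{Next (Dia a)} \<subseteq> L" using m a by simp
  have "pf {Next (Dia a)} (Or a (Next (Dia a)))" using orI2[OF G pf.hyp] a by simp
  then have "pf {Next (Dia a)} (Dia a)" using pf.mp[OF pf.lam[OF ax]] by blast
  then show ?thesis using lamI m a by simp
qed

lemma dia_self: "MDia \<in> M \<Longrightarrow> a \<in> L \<Longrightarrow> Imp a (Dia a) \<in> Lam"
proof -
  assume m: "MDia \<in> M" and a: "a \<in> L"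
  have ax: "Imp (Or a (Next (Dia a))) (Dia a) \<in> Lam" using axDia m a .
  have G: "{a} \<subseteq> L" using m a by simp
  have "pf {a} (Or a (Next (Dia a)))" using orI1[OF G pf.hyp] a m by simp
  then have "pf {a} (Dia a)" using pf.mp[OF pf.lam[OF ax]] by blast
  then show ?thesis using lamI m a by simp
qed

lemma dia_unfold: "MDia \<in> M \<Longrightarrow> a \<in> L \<Longrightarrow> Imp (Dia a) (Or a (Next (Dia a))) \<in> Lam"
proof -
  assume m: "MDia \<in> M" and a: "a \<in> L"
  let ?c = "Or a (Next (Dia a))"
  have cL: "?c \<in> L" using m a by simp
  let ?G = "{Next ?c}"
  have GL: "?G \<subseteq> L" using cL by simp
  have o: "pf ?G (Or (Next a) (Next (Next (Dia a))))" using nextOr[OF GL pf.hyp] by simp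
  have "insert (Next a) ?G \<subseteq> L" using GL a by simp
  then have 1: "pf (insert (Next a) ?G) ?c"
    using orI2[of _ "Next (Dia a)" a] nextMono[OF _ dia_self[OF m a] pf.hyp] a by simp
  have "insert (Next (Next (Dia a))) ?G \<subseteq> L" using GL a m by simp
  then have 2: "pf (insert (Next (Next (Dia a))) ?G) ?c"
    using orI2[of _ "Next (Dia a)" a] nextMono[OF _ dia_next[OF m a] pf.hyp] a by simp
  have "pf ?G ?c" using orE[OF GL o 1 2] .
  then have "Imp (Next ?c) ?c \<in> Lam" using lamI cL by simp
  then have i1: "Imp (Dia ?c) ?c \<in> Lam" using ruleDiaInd m by blast
  have "pf {a} ?c" using orI1[of "{a}" a "Next (Dia a)"] pf.hyp[of a "{a}"] a m by simp
  then have "Imp a ?c \<in> Lam" using lamI a by simp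
  then have i2: "Imp (Dia a) (Dia ?c) \<in> Lam" using ruleDiaMono m by blast
  have "pf {Dia a} ?c" using pf.mp[OF pf.lam[OF i1] pf.mp[OF pf.lam[OF i2] pf.hyp]] by simp
  then show ?thesis using lamI m a by simp
qed

lemma all_next1: "MAll \<in> M \<Longrightarrow> a \<in> L \<Longrightarrow> Imp (All a) (Next (All a)) \<in> Lam"
  and all_next2: "MAll \<in> M \<Longrightarrow> a \<in> L \<Longrightarrow> Imp (Next (All a)) (All a) \<in> Lam"
proof -
  assume m: "MAll \<in> M" and a: "a \<in> L"
  have "pf {} (And (Imp (All a) (Next (All a))) (Imp (Next (All a)) (All a)))"
    using axAllIff[OF m a] pf.lam unfolding Iff_def by blast
  then show "Imp (All a) (Next (All a)) \<in> Lam" "Imp (Next (All a)) (All a) \<in> Lam"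
    using andE1[of "{}"] andE2[of "{}"] pf_empty by blast+
qed

lemma nx_snd:
  assumes T: "prime \<Theta>" and P: "prime \<Psi>" and eq: "\<forall>c. Next c \<in> fst \<Theta> \<longleftrightarrow> c \<in> fst \<Psi>"
  shows "Next c \<in> snd \<Theta> \<longleftrightarrow> c \<in> snd \<Psi>"
proof
  assume a: "Next c \<in> snd \<Theta>"
  then have "c \<in> L" using prime_L(2)[OF T] by auto
  moreover have "c \<notin> fst \<Psi>" using a eq prime_disj[OF T] by blast
  ultimately show "c \<in> snd \<Psi>" using prime_snd[OF P] by blast
next
  assume a: "c \<in> snd \<Psi>"
  then have "Next c \<in> L" using prime_L(2)[OF P] by auto
  moreover have "Next c \<notin> fst \<Theta>" using a eq prime_disj[OF P] by blast
  ultimately show "Next c \<in> snd \<Theta>" using prime_snd[OF T] by blast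
qed

lemma sens_lemma:
  assumes T: "prime \<Theta>" and P: "prime \<Psi>" and eq: "\<forall>c. Next c \<in> fst \<Theta> \<longleftrightarrow> c \<in> fst \<Psi>"
  shows "sensible \<Theta> \<Psi>"
proof -
  note eq2 = nx_snd[OF T P eq]
  have 3: "a \<in> fst \<Theta> \<or> Dia a \<in> fst \<Psi>" if d: "Dia a \<in> fst \<Theta>" for a
  proof -
    have m: "MDia \<in> M" "a \<in> L" using d prime_L(1)[OF T] by auto
    have "Or a (Next (Dia a)) \<in> fst \<Theta>" using prime_imp[OF T d dia_unfold[OF m]] .
    then show ?thesis using prime_or[OF T] eq by blast
  qed
  have 4: "Dia a \<in> snd \<Psi>" if d: "Dia a \<in> snd \<Theta>" for a
  proof -
    have m: "MDia \<in> M" "a \<in> L" using d prime_L(2)[OF T] by auto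
    have "Next (Dia a) \<notin> fst \<Theta>"
      using prime_imp[OF T _ dia_next[OF m]] prime_disj[OF T _ d] by blast
    then have "Next (Dia a) \<in> snd \<Theta>" using prime_snd[OF T] m by simp
    then show ?thesis using eq2 by blast
  qed
  have 5: "All a \<in> fst \<Theta> \<longleftrightarrow> All a \<in> fst \<Psi>" for a
  proof (cases "All a \<in> L")
    case True
    then have m: "MAll \<in> M" "a \<in> L" by auto
    have "All a \<in> fst \<Theta> \<longleftrightarrow> Next (All a) \<in> fst \<Theta>"
      using prime_imp[OF T _ all_next1[OF m]] prime_imp[OF T _ all_next2[OF m]] by blast
    then show ?thesis using eq by blast
  next
    case False then show ?thesis using prime_L(1)[OF T] prime_L(1)[OF P] by blast
  qed
  have 6: "All a \<in> snd \<Theta> \<longleftrightarrow> All a \<in> snd \<Psi>" for a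
  proof (cases "All a \<in> L")
    case True
    have "All a \<in> snd \<Theta> \<longleftrightarrow> All a \<notin> fst \<Theta>"
      using True prime_snd[OF T] prime_disj[OF T] by blast
    moreover have "All a \<in> snd \<Psi> \<longleftrightarrow> All a \<notin> fst \<Psi>"
      using True prime_snd[OF P] prime_disj[OF P] by blast
    ultimately show ?thesis using 5 by blast
  next
    case False then show ?thesis using prime_L(2)[OF T] prime_L(2)[OF P] by blast
  qed
  show ?thesis unfolding sensible_def using eq eq2 3 4 5 6 by blast
qed

end



context ctx begin

definition succ :: "ltype \<Rightarrow> ltype" where
  "succ \<Phi> = ({a. Next a \<in> fst \<Phi>}, {a. Next a \<in> snd \<Phi>})"

lemma char:
  assumes "(\<Phi>, \<Psi>) \<in> Sc M Lam" shows "\<Psi> = succ \<Phi>"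
proof -
  have P: "prime \<Phi>" "prime \<Psi>" and s: "sensible \<Phi> \<Psi>"
    using assms unfolding Sc_def Wc_def by auto
  have "fst \<Psi> = {a. Next a \<in> fst \<Phi>}"
  proof (intro set_eqI iffI)
    fix a assume a: "a \<in> fst \<Psi>"
    then have "Next a \<in> L" using prime_L(1)[OF P(2)] by auto
    moreover have "Next a \<notin> snd \<Phi>" using s a prime_disj[OF P(2)] unfolding sensible_def by blast
    ultimately show "a \<in> {a. Next a \<in> fst \<Phi>}" using prime_L(3)[OF P(1)] by blast
  next
    fix a assume "a \<in> {a. Next a \<in> fst \<Phi>}"
    then show "a \<in> fst \<Psi>" using s unfolding sensible_def by blast
  qed
  moreover have "snd \<Psi> = {a. Next a \<in> snd \<Phi>}"
  proof (intro set_eqI iffI)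
    fix a assume a: "a \<in> snd \<Psi>"
    then have "Next a \<in> L" using prime_L(2)[OF P(2)] by auto
    moreover have "Next a \<notin> fst \<Phi>" using s a prime_disj[OF P(2)] unfolding sensible_def by blast
    ultimately show "a \<in> {a. Next a \<in> snd \<Phi>}" using prime_L(3)[OF P(1)] by blast
  next
    fix a assume "a \<in> {a. Next a \<in> snd \<Phi>}"
    then show "a \<in> snd \<Psi>" using s unfolding sensible_def by blast
  qed
  ultimately show ?thesis unfolding succ_def by (simp add: prod_eq_iff)
qed

lemma next_conj: "G \<subseteq> L \<Longrightarrow> (\<And>g. g \<in> set gs \<Longrightarrow> pf G (Next g)) \<Longrightarrow> pf G (Next (conj_list gs))"
proof (induction gs)
  case Nil
  have "Top \<in> Lam" unfolding Top_def using pf_id by simp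
  then show ?case using necL pf.lam by simp
next
  case (Cons a gs)
  have "pf G (Next a)" "pf G (Next (conj_list gs))" using Cons by auto
  then show ?case using nextAnd[OF Cons.prems(1)] by simp
qed

lemma next_disj: "G \<subseteq> L \<Longrightarrow> set ds \<subseteq> L \<Longrightarrow> pf G (Next (disj_list ds)) \<Longrightarrow> pf G (disj_list (map Next ds))"
proof (induction ds arbitrary: G)
  case Nil
  have "pf G Bot" using nextBot[OF Nil(1)] Nil(3) by simp
  then show ?case using botE[OF Nil(1)] by simp
next
  case (Cons d ds)
  have dL: "d \<in> L" "set ds \<subseteq> L" using Cons.prems by auto
  have mL: "set (map Next (d # ds)) \<subseteq> L" using dL by auto
  have o: "pf G (Or (Next d) (Next (disj_list ds)))" using nextOr[OF Cons.prems(1)] Cons.prems(3) by simp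
  have G1: "insert (Next d) G \<subseteq> L" using Cons.prems dL by simp
  have 1: "pf (insert (Next d) G) (disj_list (map Next (d # ds)))"
    using disjI_list[OF G1 pf.hyp _ mL, of "Next d"] by simp
  let ?G = "insert (Next (disj_list ds)) G"
  have G2: "?G \<subseteq> L" using Cons.prems dL by simp
  have "pf ?G (disj_list (map Next ds))" using Cons.IH[OF G2 dL(2) pf.hyp] by simp
  then have 2: "pf ?G (disj_list (map Next (d # ds)))"
    using orI2[OF G2, of _ "Next d"] dL by simp
  show ?case using orE[OF Cons.prems(1) o 1 2] .
qed

lemma succ_prime: assumes P: "prime \<Phi>" shows "prime (succ \<Phi>)"
proof -
  have s1: "fst (succ \<Phi>) \<subseteq> L" "snd (succ \<Phi>) \<subseteq> L"
    using prime_L(1,2)[OF P] unfolding succ_def by auto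
  have s2: "fst (succ \<Phi>) \<union> snd (succ \<Phi>) = L"
    using prime_L(3)[OF P] s1 unfolding succ_def by auto
  have "\<not> derives Lam (fst (succ \<Phi>)) (snd (succ \<Phi>))"
  proof
    assume "derives Lam (fst (succ \<Phi>)) (snd (succ \<Phi>))"
    then obtain gs ds where g: "set gs \<subseteq> fst (succ \<Phi>)" "set ds \<subseteq> snd (succ \<Phi>)"
      "Imp (conj_list gs) (disj_list ds) \<in> Lam" unfolding derives_def by blast
    let ?H = "Next ` set gs"
    have HP: "?H \<subseteq> fst \<Phi>" using g unfolding succ_def by auto
    have HL: "?H \<subseteq> L" using HP prime_L(1)[OF P] by blast
    have dL: "set ds \<subseteq> L" using g s1 by blast
    have "pf ?H (Next (conj_list gs))" using next_conj[OF HL] pf.hyp by simp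
    then have "pf ?H (Next (disj_list ds))" using nextMono[OF HL g(3)] by simp
    then have "pf ?H (disj_list (map Next ds))" using next_disj[OF HL dL] by simp
    moreover have "set (map Next ds) \<subseteq> snd \<Phi>" using g unfolding succ_def by auto
    ultimately have "derives Lam (fst \<Phi>) (snd \<Phi>)"
      using derives_pfI[OF _ HP prime_L(1)[OF P]] by blast
    then show False using prime_L(4)[OF P] by blast
  qed
  then show ?thesis unfolding prime_type_def using s1 s2 by blast
qed

lemma succ_Sc: assumes P: "prime \<Phi>" shows "(\<Phi>, succ \<Phi>) \<in> Sc M Lam"
proof -
  have "sensible \<Phi> (succ \<Phi>)"
    using sens_lemma[OF P succ_prime[OF P]] unfolding succ_def by simp
  then show ?thesis unfolding Sc_def Wc_def using P succ_prime[OF P] by simp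
qed

lemma disj_sub: "G \<subseteq> L \<Longrightarrow> set ds \<subseteq> L \<Longrightarrow> pf G (disj_list ds1) \<Longrightarrow> set ds1 \<subseteq> set ds \<Longrightarrow> pf G (disj_list ds)"
proof -
  assume G: "G \<subseteq> L" and d: "set ds \<subseteq> L" and p: "pf G (disj_list ds1)" and s: "set ds1 \<subseteq> set ds"
  have "pf (insert x G) (disj_list ds)" if "x \<in> set ds1" for x
  proof -
    have "insert x G \<subseteq> L" using G d s that by auto
    then show ?thesis using disjI_list[OF _ pf.hyp _ d, of "insert x G" x] s that by auto
  qed
  then show ?thesis using disjE_list[OF G p] d by simp
qed

lemma cut:
  assumes XL: "X \<subseteq> L" and YL: "Y \<subseteq> L" and aL: "a \<in> L"
    and d1: "derives Lam (insert a X) Y" and d2: "derives Lam X (insert a Y)"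
  shows "derives Lam X Y"
proof -
  obtain gs1 ds1 where 1: "set gs1 \<subseteq> insert a X" "set ds1 \<subseteq> Y" "pf (set gs1) (disj_list ds1)"
  proof -
    have "insert a X \<subseteq> L" using XL aL by simp
    then show ?thesis using derives_pfD[OF d1] that by blast
  qed
  obtain gs2 ds2 where 2: "set gs2 \<subseteq> X" "set ds2 \<subseteq> insert a Y" "pf (set gs2) (disj_list ds2)"
    using derives_pfD[OF d2 XL] by blast
  let ?H = "(set gs1 - {a}) \<union> set gs2"
  let ?ds = "ds1 @ filter (\<lambda>d. d \<noteq> a) ds2"
  have HX: "?H \<subseteq> X" using 1 2 by auto
  have HL: "?H \<subseteq> L" using HX XL by auto
  have dsY: "set ?ds \<subseteq> Y" using 1 2 by auto
  have dsL: "set ?ds \<subseteq> L" using dsY YL by auto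
  have p2: "pf ?H (disj_list ds2)" by (rule pf_mono[OF 2(3)]) blast
  have "pf (insert d ?H) (disj_list ?ds)" if d: "d \<in> set ds2" for d
  proof (cases "d = a")
    case True
    have "pf (insert d ?H) (disj_list ds1)" by (rule pf_mono[OF 1(3)]) (use 1 True in blast)
    moreover have "insert d ?H \<subseteq> L" using HL aL True by simp
    moreover have "set ds1 \<subseteq> set ?ds" by simp
    ultimately show ?thesis using disj_sub[OF _ dsL] by blast
  next
    case False
    then have "d \<in> set ?ds" using d by simp
    moreover have "insert d ?H \<subseteq> L" using HL dsL calculation by auto
    ultimately show ?thesis using disjI_list[OF _ pf.hyp _ dsL, of "insert d ?H" d] by simp
  qed
  then have "pf ?H (disj_list ?ds)" using disjE_list[OF HL p2] dsL by simp
  then show ?thesis using derives_pfI[OF _ HX XL dsY] by simp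
qed

definition Pp :: "(bool \<times> form) set \<Rightarrow> form set" where "Pp S = {a. (True, a) \<in> S}"
definition Nn :: "(bool \<times> form) set \<Rightarrow> form set" where "Nn S = {a. (False, a) \<in> S}"

lemma lindenbaum:
  assumes GL: "\<Gamma> \<subseteq> L" and DL: "\<Delta> \<subseteq> L" and nd: "\<not> derives Lam \<Gamma> \<Delta>"
  shows "\<exists>\<Theta>. prime \<Theta> \<and> \<Gamma> \<subseteq> fst \<Theta> \<and> \<Delta> \<subseteq> snd \<Theta>"
proof -
  define A where "A = {S. \<Gamma> \<subseteq> Pp S \<and> \<Delta> \<subseteq> Nn S \<and> Pp S \<subseteq> L \<and> Nn S \<subseteq> L \<and> \<not> derives Lam (Pp S) (Nn S)}"
  have "\<exists>U\<in>A. \<forall>X\<in>C. X \<subseteq> U" if ch: "subset.chain A C" for C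
  proof (cases "C = {}")
    case True
    let ?S = "Pair True ` \<Gamma> \<union> Pair False ` \<Delta>"
    have "Pp ?S = \<Gamma>" "Nn ?S = \<Delta>" unfolding Pp_def Nn_def by auto
    then have "?S \<in> A" unfolding A_def using GL DL nd by simp
    then show ?thesis using True by blast
  next
    case False
    have CA: "C \<subseteq> A" using ch unfolding subset_chain_def by blast
    have PU: "Pp (\<Union>C) = (\<Union>S\<in>C. Pp S)" "Nn (\<Union>C) = (\<Union>S\<in>C. Nn S)"
      unfolding Pp_def Nn_def by auto
    obtain S0 where "S0 \<in> C" using False by blast
    then have S0A: "S0 \<in> A" "S0 \<in> C" using CA by blast+
    have "Pp S0 \<subseteq> Pp (\<Union>C)" "Nn S0 \<subseteq> Nn (\<Union>C)" using S0A unfolding Pp_def Nn_def by blast+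
    moreover have "\<Gamma> \<subseteq> Pp S0" "\<Delta> \<subseteq> Nn S0" using S0A(1) unfolding A_def by simp_all
    ultimately have 1: "\<Gamma> \<subseteq> Pp (\<Union>C)" "\<Delta> \<subseteq> Nn (\<Union>C)" by blast+
    have 2: "Pp (\<Union>C) \<subseteq> L" "Nn (\<Union>C) \<subseteq> L"
    proof -
      have "Pp S \<subseteq> L \<and> Nn S \<subseteq> L" if "S \<in> C" for S using that CA unfolding A_def by blast
      then show "Pp (\<Union>C) \<subseteq> L" "Nn (\<Union>C) \<subseteq> L" unfolding PU by blast+
    qed
    have 3: "\<not> derives Lam (Pp (\<Union>C)) (Nn (\<Union>C))"
    proof
      assume "derives Lam (Pp (\<Union>C)) (Nn (\<Union>C))"
      then obtain gs ds where g: "set gs \<subseteq> Pp (\<Union>C)" "set ds \<subseteq> Nn (\<Union>C)"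
        "Imp (conj_list gs) (disj_list ds) \<in> Lam" unfolding derives_def by blast
      let ?F = "Pair True ` set gs \<union> Pair False ` set ds"
      have "?F \<subseteq> \<Union>C" using g unfolding Pp_def Nn_def by auto
      moreover have "finite ?F" by simp
      ultimately obtain B where B: "B \<in> C" "?F \<subseteq> B"
        using finite_subset_Union_chain[of ?F C A] False ch by blast
      then have "set gs \<subseteq> Pp B" "set ds \<subseteq> Nn B" unfolding Pp_def Nn_def by auto
      then have "derives Lam (Pp B) (Nn B)" unfolding derives_def using g(3) by blast
      then show False using B CA unfolding A_def by blast
    qed
    have "\<Union>C \<in> A" unfolding A_def using 1 2 3 by blast
    then show ?thesis by blast
  qed
  then obtain S where S: "S \<in> A" and mx: "\<forall>X\<in>A. S \<subseteq> X \<longrightarrow> X = S"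
    using subset_Zorn[of A] by blast
  have SA: "\<Gamma> \<subseteq> Pp S" "\<Delta> \<subseteq> Nn S" "Pp S \<subseteq> L" "Nn S \<subseteq> L" "\<not> derives Lam (Pp S) (Nn S)"
    using S unfolding A_def by blast+
  have cover: "Pp S \<union> Nn S = L"
  proof (rule ccontr)
    assume "Pp S \<union> Nn S \<noteq> L"
    then obtain a where a: "a \<in> L" "a \<notin> Pp S" "a \<notin> Nn S" using SA by blast
    have PT: "Pp (insert (True, a) S) = insert a (Pp S)" "Nn (insert (True, a) S) = Nn S"
      unfolding Pp_def Nn_def by auto
    have PF: "Pp (insert (False, a) S) = Pp S" "Nn (insert (False, a) S) = insert a (Nn S)"
      unfolding Pp_def Nn_def by auto
    have "insert (True, a) S \<noteq> S" using a(2) unfolding Pp_def by auto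
    then have "insert (True, a) S \<notin> A" using mx by blast
    moreover have "\<Gamma> \<subseteq> Pp (insert (True, a) S)" "\<Delta> \<subseteq> Nn (insert (True, a) S)"
      "Pp (insert (True, a) S) \<subseteq> L" "Nn (insert (True, a) S) \<subseteq> L"
      unfolding PT using SA a by blast+
    ultimately have "derives Lam (Pp (insert (True, a) S)) (Nn (insert (True, a) S))"
      unfolding A_def by blast
    then have d1: "derives Lam (insert a (Pp S)) (Nn S)" unfolding PT .
    have "insert (False, a) S \<noteq> S" using a(3) unfolding Nn_def by auto
    then have "insert (False, a) S \<notin> A" using mx by blast
    moreover have "\<Gamma> \<subseteq> Pp (insert (False, a) S)" "\<Delta> \<subseteq> Nn (insert (False, a) S)"
      "Pp (insert (False, a) S) \<subseteq> L" "Nn (insert (False, a) S) \<subseteq> L"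
      unfolding PF using SA a by blast+
    ultimately have "derives Lam (Pp (insert (False, a) S)) (Nn (insert (False, a) S))"
      unfolding A_def by blast
    then have d2: "derives Lam (Pp S) (insert a (Nn S))" unfolding PF .
    show False using cut[OF SA(3) SA(4) a(1) d1 d2] SA(5) by blast
  qed
  have "prime (Pp S, Nn S)" unfolding prime_type_def using SA cover by simp
  then show ?thesis using SA by (intro exI[of _ "(Pp S, Nn S)"]) simp
qed

end



context ctx begin

lemma open_lemma:
  assumes ax: "\<forall>a b. a \<in> L \<longrightarrow> b \<in> L \<longrightarrow> Imp (Imp (Next a) (Next b)) (Next (Imp a b)) \<in> Lam"
    and s0: "(\<Phi>, \<Psi>0) \<in> Sc M Lam" and PW: "\<Psi> \<in> Wc M Lam" and le: "leq_c \<Psi>0 \<Psi>"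
  shows "\<exists>\<Theta>\<in>Wc M Lam. leq_c \<Phi> \<Theta> \<and> (\<Theta>, \<Psi>) \<in> Sc M Lam"
proof -
  have PF: "prime \<Phi>" and P0: "prime \<Psi>0" and s: "sensible \<Phi> \<Psi>0"
    using s0 unfolding Sc_def Wc_def by auto
  have PP: "prime \<Psi>" using PW unfolding Wc_def by simp
  define \<Gamma> where "\<Gamma> = fst \<Phi> \<union> Next ` fst \<Psi>"
  define \<Delta> where "\<Delta> = Next ` snd \<Psi>"
  have GL: "\<Gamma> \<subseteq> L" unfolding \<Gamma>_def using prime_L(1)[OF PF] prime_L(1)[OF PP] by auto
  have DL: "\<Delta> \<subseteq> L" unfolding \<Delta>_def using prime_L(2)[OF PP] by auto
  have injN: "inj Next" by (rule injI) simp
  have nd: "\<not> derives Lam \<Gamma> \<Delta>"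
  proof
    assume "derives Lam \<Gamma> \<Delta>"
    then obtain gs ds where g: "set gs \<subseteq> \<Gamma>" "set ds \<subseteq> \<Delta>"
      "Imp (conj_list gs) (disj_list ds) \<in> Lam" unfolding derives_def by blast
    have "\<forall>y\<in>set ds. \<exists>x. y = Next x" using g(2) unfolding \<Delta>_def by blast
    then obtain ds0 where ds0: "ds = map Next ds0" using ex_map_conv[of ds Next] by blast
    have ds0P: "set ds0 \<subseteq> snd \<Psi>"
    proof
      fix x assume "x \<in> set ds0"
      then have "Next x \<in> Next ` snd \<Psi>" using g(2) ds0 unfolding \<Delta>_def by auto
      then show "x \<in> snd \<Psi>" by auto
    qed
    define Gs where "Gs = set gs \<inter> fst \<Phi>"
    define As where "As = {a \<in> fst \<Psi>. Next a \<in> set gs}"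
    have finAs: "finite As"
    proof -
      have "As \<subseteq> Next -` set gs" unfolding As_def by auto
      moreover have "finite (Next -` set gs)" using finite_vimageI[OF _ injN] by simp
      ultimately show ?thesis using finite_subset by blast
    qed
    obtain as where as: "set as = As" using finite_list[OF finAs] by blast
    define A where "A = conj_list as"
    define D where "D = disj_list ds0"
    have AsL: "As \<subseteq> L" unfolding As_def using prime_L(1)[OF PP] by auto
    have AL: "A \<in> L" unfolding A_def using as AsL by simp
    have d0L: "set ds0 \<subseteq> L" using ds0P prime_L(2)[OF PP] by auto
    have DLL: "D \<in> L" unfolding D_def using d0L by simp
    have GsL: "Gs \<subseteq> L" unfolding Gs_def using prime_L(1)[OF PF] by auto
    define G' where "G' = insert (Next A) Gs"
    have G'L: "G' \<subseteq> L" unfolding G'_def using GsL AL by simp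
    have hA: "pf G' (Next A)" unfolding G'_def by (rule pf.hyp) simp
    have "pf G' g" if gi: "g \<in> set gs" for g
    proof (cases "g \<in> fst \<Phi>")
      case True
      then show ?thesis unfolding G'_def Gs_def using gi by (intro pf.hyp) simp
    next
      case False
      then obtain a where a: "g = Next a" "a \<in> fst \<Psi>" using gi g(1) unfolding \<Gamma>_def by auto
      then have aAs: "a \<in> set as" using as gi unfolding As_def by simp
      have "{A} \<subseteq> L" using AL by simp
      then have "pf {A} a" using conjE_list[of "{A}" as a] pf.hyp[of A "{A}"] aAs unfolding A_def by simp
      then have "Imp A a \<in> Lam" using lamI AL by simp
      then show ?thesis using nextMono[OF G'L _ hA] a(1) by simp
    qed
    then have "pf G' (conj_list gs)" using conjI_list[OF G'L] by blast
    then have pd: "pf G' (disj_list (map Next ds0))" using pf.mp[OF pf.lam[OF g(3)]] ds0 by simp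
    have "pf (insert d G') (Next D)" if di: "d \<in> set (map Next ds0)" for d
    proof -
      obtain d0 where d0: "d = Next d0" "d0 \<in> set ds0" using di by auto
      have "{d0} \<subseteq> L" using d0 d0L by auto
      then have "pf {d0} D" using disjI_list[of "{d0}" d0 ds0] pf.hyp[of d0 "{d0}"] d0 d0L
        unfolding D_def by simp
      then have i: "Imp d0 D \<in> Lam" using lamI d0 d0L by auto
      have "insert d G' \<subseteq> L" using G'L d0 d0L by auto
      then show ?thesis using nextMono[OF _ i] pf.hyp[of d "insert d G'"] d0(1) by simp
    qed
    then have "pf G' (Next D)" using disjE_list[OF G'L pd] DLL by simp
    then have "pf Gs (Imp (Next A) (Next D))" using ded[of "Next A" Gs] GsL AL unfolding G'_def by simp
    moreover have "Imp (Imp (Next A) (Next D)) (Next (Imp A D)) \<in> Lam" using ax AL DLL by blast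
    ultimately have "pf Gs (Next (Imp A D))" using pf.mp pf.lam by blast
    moreover have "finite Gs" "Gs \<subseteq> fst \<Phi>" unfolding Gs_def by auto
    ultimately have "Next (Imp A D) \<in> fst \<Phi>" using prime_closed[OF PF] AL DLL by simp
    then have "Imp A D \<in> fst \<Psi>0" using s unfolding sensible_def by blast
    then have iD: "Imp A D \<in> fst \<Psi>" using le unfolding leq_c_def by blast
    have "pf As A" unfolding A_def using conjI_list[OF AsL, of as] pf.hyp as by blast
    then have aP: "A \<in> fst \<Psi>" using prime_closed[OF PP finAs] AL unfolding As_def by blast
    have "pf {A, Imp A D} D" using pf.mp[of "{A, Imp A D}" A D] pf.hyp by simp
    then have "D \<in> fst \<Psi>" using prime_closed[OF PP, of "{A, Imp A D}" D] aP iD DLL by simp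
    moreover have "pf {D} (disj_list ds0)" using pf.hyp unfolding D_def by simp
    ultimately have "derives Lam (fst \<Psi>) (snd \<Psi>)"
      using derives_pfI[OF _ _ prime_L(1)[OF PP] ds0P, of "{D}"] by simp
    then show False using prime_L(4)[OF PP] by blast
  qed
  obtain \<Theta> where T: "prime \<Theta>" "\<Gamma> \<subseteq> fst \<Theta>" "\<Delta> \<subseteq> snd \<Theta>"
    using lindenbaum[OF GL DL nd] by blast
  have l1: "fst \<Phi> \<subseteq> fst \<Theta>" using T(2) unfolding \<Gamma>_def by blast
  have l2: "snd \<Theta> \<subseteq> snd \<Phi>"
  proof
    fix x assume x: "x \<in> snd \<Theta>"
    then have "x \<in> L" using prime_L(2)[OF T(1)] by blast
    moreover have "x \<notin> fst \<Phi>" using x l1 prime_disj[OF T(1)] by blast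
    ultimately show "x \<in> snd \<Phi>" using prime_snd[OF PF] by blast
  qed
  have eq: "\<forall>c. Next c \<in> fst \<Theta> \<longleftrightarrow> c \<in> fst \<Psi>"
  proof (intro allI iffI)
    fix c assume c: "Next c \<in> fst \<Theta>"
    then have "c \<in> L" using prime_L(1)[OF T(1)] by auto
    moreover have "c \<notin> snd \<Psi>"
    proof
      assume "c \<in> snd \<Psi>"
      then have "Next c \<in> snd \<Theta>" using T(3) unfolding \<Delta>_def by blast
      then show False using c prime_disj[OF T(1)] by blast
    qed
    ultimately show "c \<in> fst \<Psi>" using prime_L(3)[OF PP] by blast
  next
    fix c assume "c \<in> fst \<Psi>"
    then show "Next c \<in> fst \<Theta>" using T(2) unfolding \<Gamma>_def by blast
  qed
  have "sensible \<Theta> \<Psi>" using sens_lemma[OF T(1) PP eq] .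
  then have "(\<Theta>, \<Psi>) \<in> Sc M Lam" unfolding Sc_def Wc_def using T(1) PP by simp
  moreover have "\<Theta> \<in> Wc M Lam" unfolding Wc_def using T(1) by simp
  ultimately show ?thesis using l1 l2 unfolding leq_c_def by blast
qed

lemma mono_lemma: "(\<Phi>, \<Psi>) \<in> Sc M Lam \<Longrightarrow> (\<Phi>', \<Psi>') \<in> Sc M Lam \<Longrightarrow> leq_c \<Phi> \<Phi>' \<Longrightarrow> leq_c \<Psi> \<Psi>'"
proof -
  assume a: "(\<Phi>, \<Psi>) \<in> Sc M Lam" "(\<Phi>', \<Psi>') \<in> Sc M Lam" "leq_c \<Phi> \<Phi>'"
  have "\<Psi> = succ \<Phi>" "\<Psi>' = succ \<Phi>'" using char a by blast+
  then show "leq_c \<Psi> \<Psi>'" using a(3) unfolding leq_c_def succ_def by auto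
qed

end

theorem lemma5p5:
  assumes adm: "admissible M \<Lambda>"
  shows "(\<forall>\<Phi>\<in>Wc M \<Lambda>. \<exists>!\<Psi>. (\<Phi>, \<Psi>) \<in> Sc M \<Lambda>)
       \<and> (\<forall>\<Phi> \<Phi>' \<Psi> \<Psi>'. (\<Phi>, \<Psi>) \<in> Sc M \<Lambda> \<longrightarrow> (\<Phi>', \<Psi>') \<in> Sc M \<Lambda> \<longrightarrow>
             leq_c \<Phi> \<Phi>' \<longrightarrow> leq_c \<Psi> \<Psi>')
       \<and> ((\<forall>\<phi> \<psi>. \<phi> \<in> lang M \<longrightarrow> \<psi> \<in> lang M \<longrightarrow>
              Imp (Imp (Next \<phi>) (Next \<psi>)) (Next (Imp \<phi> \<psi>)) \<in> \<Lambda>) \<longrightarrow>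
          (\<forall>\<Phi> \<Psi>0 \<Psi>. (\<Phi>, \<Psi>0) \<in> Sc M \<Lambda> \<longrightarrow> \<Psi> \<in> Wc M \<Lambda> \<longrightarrow> leq_c \<Psi>0 \<Psi> \<longrightarrow>
             (\<exists>\<Theta>\<in>Wc M \<Lambda>. leq_c \<Phi> \<Theta> \<and> (\<Theta>, \<Psi>) \<in> Sc M \<Lambda>)))"
proof -
  interpret ctx M \<Lambda> by (rule ctx.intro[OF adm])
  have 1: "\<forall>\<Phi>\<in>Wc M \<Lambda>. \<exists>!\<Psi>. (\<Phi>, \<Psi>) \<in> Sc M \<Lambda>"
  proof
    fix \<Phi> assume "\<Phi> \<in> Wc M \<Lambda>"
    then have "(\<Phi>, succ \<Phi>) \<in> Sc M \<Lambda>" using succ_Sc unfolding Wc_def by simp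
    then show "\<exists>!\<Psi>. (\<Phi>, \<Psi>) \<in> Sc M \<Lambda>" using char by blast
  qed
  have 2: "\<forall>\<Phi> \<Phi>' \<Psi> \<Psi>'. (\<Phi>, \<Psi>) \<in> Sc M \<Lambda> \<longrightarrow> (\<Phi>', \<Psi>') \<in> Sc M \<Lambda> \<longrightarrow>
             leq_c \<Phi> \<Phi>' \<longrightarrow> leq_c \<Psi> \<Psi>'"
    using mono_lemma by blast
  show ?thesis using 1 2 open_lemma by blast
qed

end
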